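(* Let $d\ge1$, let $y=(y_S)_{S\in\mathcal{V}_{n,2d}}$ be a vector over $\mathbb{F}_q$, and let $0\le e\le d-1$ with $r_e=r_{e+1}>0$. Let $f_1,\dots,f_m$ be polynomials $f_\ell(x)=\sum_{U\in\mathcal{V}_{n,2}}c_{\ell,U}x^U$ with $c_{\ell,U}\in\mathbb{F}_q$, and suppose $y$ satisfies $\sum_{U\in\mathcal{V}_{n,2}}c_{\ell,U}y_{U\cup W}=0$ for every $\ell\in[m]$ and every $W\in\mathcal{V}_{n,2d-2}$. Then there are linear maps $T_1,\dots,T_n:C_e\to C_e$ such that: (i) $T_i^2=T_i$ for every $i$; (ii) $T_iT_j=T_jT_i$ for all $i,j$; (iii) for every $\ell\in[m]$, $\sum_{U\in\mathcal{V}_{n,2}}c_{\ell,U}T_U=0$ as a linear map on $C_e$, where $T_U:=\prod_{i\in U}T_i$ and $T_\emptyset$ is the identity.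
   Context: $\mathbb{F}_q$ is a finite field. $\mathcal{V}_{n,j}:=\{S\subseteq\{1,\dots,n\}:0\le|S|\le j\}$ (including $\emptyset$); $x^U:=\prod_{i\in U}x_i$, $x^\emptyset=1$. For $0\le e\le d$, $H_e(y)$ is the matrix with rows and columns indexed by $\mathcal{V}_{n,e}$ and $(S,T)$ entry $y_{S\cup T}$; $r_e:=\operatorname{rank}H_e(y)$; $C_e$ is the column space of $H_e(y)$. *)

theory Defs
  imports Complex_Main "HOL-Library.Function_Algebras"
begin

text \<open>Vectors indexed by subsets of {1..n} are represented as functions
  nat set => 'a, vanishing outside the relevant index set.\<close>

definition fscale :: "'a::field \<Rightarrow> (nat set \<Rightarrow> 'a) \<Rightarrow> (nat set \<Rightarrow> 'a)" where
  "fscale c v = (\<lambda>S. c * v S)"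

lemma vector_space_fscale: "vector_space fscale"
  by unfold_locales (auto simp: fscale_def fun_eq_iff algebra_simps)

definition Vset :: "nat \<Rightarrow> nat \<Rightarrow> nat set set" where
  "Vset n j = {S. S \<subseteq> {1..n} \<and> card S \<le> j}"

text \<open>Column T of H_e(y): the vector (y (S \<union> T)) indexed by S in V n e.\<close>
definition Hcol :: "nat \<Rightarrow> nat \<Rightarrow> (nat set \<Rightarrow> 'a::field) \<Rightarrow> nat set \<Rightarrow> (nat set \<Rightarrow> 'a)" where
  "Hcol n e y T = (\<lambda>S. if S \<in> Vset n e then y (S \<union> T) else 0)"

definition colspace :: "nat \<Rightarrow> nat \<Rightarrow> (nat set \<Rightarrow> 'a::field) \<Rightarrow> (nat set \<Rightarrow> 'a) set" where
  "colspace n e y = module.span fscale (Hcol n e y ` Vset n e)"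

definition rankH :: "nat \<Rightarrow> nat \<Rightarrow> (nat set \<Rightarrow> 'a::field) \<Rightarrow> nat" where
  "rankH n e y = vector_space.dim fscale (colspace n e y)"

definition TU :: "(nat \<Rightarrow> 'b \<Rightarrow> 'b) \<Rightarrow> nat set \<Rightarrow> 'b \<Rightarrow> 'b" where
  "TU T U = foldr (\<circ>) (map T (sorted_list_of_set U)) id"

end

theory Submission
  imports Defs
begin
interpretation V: vector_space "fscale :: 'a::field \<Rightarrow> (nat set \<Rightarrow> 'a) \<Rightarrow> _"
  by (rule vector_space_fscale)

definition prj :: "nat \<Rightarrow> nat \<Rightarrow> (nat set \<Rightarrow> 'a::field) \<Rightarrow> (nat set \<Rightarrow> 'a)" where
  "prj n e w = (\<lambda>S. if S \<in> Vset n e then w S else 0)"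

definition shf :: "nat \<Rightarrow> nat \<Rightarrow> nat \<Rightarrow> (nat set \<Rightarrow> 'a::field) \<Rightarrow> (nat set \<Rightarrow> 'a)" where
  "shf n e i w = (\<lambda>S. if S \<in> Vset n e then w (S \<union> {i}) else 0)"

lemma linear_prj: "Vector_Spaces.linear fscale fscale (prj n e :: (nat set \<Rightarrow> 'a::field) \<Rightarrow> _)"
  by (rule linear_module_homI, unfold_locales)
     (auto simp: prj_def fscale_def fun_eq_iff)

lemma linear_shf: "Vector_Spaces.linear fscale fscale (shf n e i :: (nat set \<Rightarrow> 'a::field) \<Rightarrow> _)"
  by (rule linear_module_homI, unfold_locales)
     (auto simp: shf_def fscale_def fun_eq_iff)

lemma finite_Vset: "finite (Vset n j)"
  unfolding Vset_def by (rule finite_subset[of _ "Pow {1..n}"]) auto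

lemma Vset_mono: "j \<le> k \<Longrightarrow> Vset n j \<subseteq> Vset n k"
  unfolding Vset_def by auto

lemma Vset_insert: "T \<in> Vset n j \<Longrightarrow> i \<in> {1..n} \<Longrightarrow> T \<union> {i} \<in> Vset n (j+1)"
proof -
  assume T: "T \<in> Vset n j" and i: "i \<in> {1..n}"
  have fT: "finite T" using T unfolding Vset_def by (auto intro: finite_subset)
  have "card (T \<union> {i}) \<le> card T + 1"
    using fT by (simp add: card_insert_if)
  then show ?thesis using T i unfolding Vset_def by auto
qed

lemma prj_Hcol: "prj n e (Hcol n (e+1) y T) = Hcol n e y T"
  using Vset_mono[of e "e+1" n] by (auto simp: prj_def Hcol_def fun_eq_iff)

lemma shf_Hcol: "i \<in> {1..n} \<Longrightarrow> shf n e i (Hcol n (e+1) y T) = Hcol n e y (T \<union> {i})"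
  using Vset_insert[of _ n e i] by (auto simp: shf_def Hcol_def fun_eq_iff Un_ac)

lemma sum_fun_apply: "(sum f A) S = (\<Sum>x\<in>A. f x S)"
  by (induct A rule: infinite_finite_induct) auto

definition linon :: "(nat set \<Rightarrow> 'a::field) set \<Rightarrow> ((nat set \<Rightarrow> 'a) \<Rightarrow> (nat set \<Rightarrow> 'a)) \<Rightarrow> bool" where
  "linon A f \<longleftrightarrow> (\<forall>u\<in>A. \<forall>v\<in>A. f (u+v) = f u + f v) \<and> (\<forall>a. \<forall>v\<in>A. f (fscale a v) = fscale a (f v))"

definition pres :: "'b set \<Rightarrow> ('b \<Rightarrow> 'b) \<Rightarrow> bool" where
  "pres A f \<longleftrightarrow> (\<forall>v\<in>A. f v \<in> A)"

lemma fscale_0[simp]: "fscale 0 v = 0" by (simp add: fscale_def fun_eq_iff)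

lemma zero_on_span:
  assumes "linon (V.span G) f" "\<And>x. x \<in> G \<Longrightarrow> f x = 0" "v \<in> V.span G"
  shows "f v = 0"
proof -
  have "v \<in> V.span G \<and> f v = 0"
    using assms(3)
  proof (induct rule: V.span_induct_alt)
    case base
    have "f (fscale 0 0) = fscale 0 (f 0)" using assms(1) V.span_zero unfolding linon_def by blast
    then have "f 0 = 0" by simp
    then show ?case using V.span_zero by blast
  next
    case (step c x y)
    have x: "x \<in> V.span G" using step(1) by (rule V.span_base)
    have "f (fscale c x + y) = f (fscale c x) + f y"
      using assms(1) V.span_scale[OF x] step(2) unfolding linon_def by blast
    also have "\<dots> = fscale c (f x) + f y" using assms(1) x unfolding linon_def by simp
    also have "\<dots> = 0" using step assms(2) by (simp add: fscale_def zero_fun_def)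
    finally show ?case using step x V.span_add V.span_scale by blast
  qed
  then show ?thesis by simp
qed

lemma linon_comp: "linon A f \<Longrightarrow> linon A g \<Longrightarrow> pres A g \<Longrightarrow> linon A (f \<circ> g)"
  unfolding linon_def pres_def by (auto simp: V.scale_right_distrib)

lemma linon_diff: "linon A f \<Longrightarrow> linon A g \<Longrightarrow> linon A (\<lambda>v. f v - g v)"
  unfolding linon_def by (auto simp: V.scale_right_diff_distrib)

lemma pres_comp: "pres A f \<Longrightarrow> pres A g \<Longrightarrow> pres A (f \<circ> g)"
  unfolding pres_def by auto

lemma linon_id: "linon A id" unfolding linon_def by auto
lemma pres_id: "pres A id" unfolding pres_def by auto

lemma linon_sum: "(\<And>U. U \<in> I \<Longrightarrow> linon A (F U)) \<Longrightarrow> linon A (\<lambda>v. \<Sum>U\<in>I. fscale (k U) (F U v))"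
  unfolding linon_def
  by (auto simp: sum.distrib V.scale_right_distrib V.scale_sum_right V.scale_scale mult.commute intro!: sum.cong)

lemma TU_foldr: "set xs \<subseteq> B \<Longrightarrow> (\<And>i. i \<in> B \<Longrightarrow> linon A (T i) \<and> pres A (T i)) \<Longrightarrow>
   linon A (foldr (\<circ>) (map T xs) id) \<and> pres A (foldr (\<circ>) (map T xs) id)"
  by (induct xs) (auto simp: linon_id pres_id intro: linon_comp pres_comp)

lemma TU_lin: "finite U \<Longrightarrow> U \<subseteq> B \<Longrightarrow> (\<And>i. i \<in> B \<Longrightarrow> linon A (T i) \<and> pres A (T i)) \<Longrightarrow>
   linon A (TU T U) \<and> pres A (TU T U)"
  unfolding TU_def by (rule TU_foldr) auto

interpretation P: vector_space_pair "fscale :: 'a::field \<Rightarrow> (nat set \<Rightarrow> 'a) \<Rightarrow> _" "fscale :: 'a::field \<Rightarrow> (nat set \<Rightarrow> 'a) \<Rightarrow> _"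
  by unfold_locales

lemma flat:
  fixes y :: "nat set \<Rightarrow> 'a::field"
  assumes dimeq: "V.dim (colspace n e y) = V.dim (colspace n (e+1) y)"
  shows "inj_on (prj n e) (colspace n (e+1) y) \<and> prj n e ` colspace n (e+1) y = colspace n e y
       \<and> colspace n (e+1) y \<subseteq> V.span (Hcol n (e+1) y ` Vset n e)"
proof -
  define H0 where "H0 = Hcol n e y"
  define H1 where "H1 = Hcol n (e+1) y"
  define Ce where "Ce = colspace n e y"
  define Ce1 where "Ce1 = colspace n (e+1) y"
  have Ce: "Ce = V.span (H0 ` Vset n e)" by (simp add: Ce_def H0_def colspace_def)
  have Ce1: "Ce1 = V.span (H1 ` Vset n (e+1))" by (simp add: Ce1_def H1_def colspace_def)
  have pH: "prj n e (H1 T) = H0 T" for T using prj_Hcol[of n e y T] by (simp add: H0_def H1_def)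
  have lp: "Vector_Spaces.linear fscale fscale (prj n e :: (nat set \<Rightarrow> 'a) \<Rightarrow> _)" by (rule linear_prj)
  obtain K where K: "K \<subseteq> H0 ` Vset n e" "V.independent K" "H0 ` Vset n e \<subseteq> V.span K"
    by (rule V.maximal_independent_subset)
  have cardK: "card K = V.dim Ce"
    using V.basis_card_eq_dim[OF K(1) K(3) K(2)] Ce by simp
  obtain Bi where Bi: "Bi \<subseteq> Vset n e" "inj_on H0 Bi" "K = H0 ` Bi"
    using K(1) by (auto simp: subset_image_inj)
  define G where "G = H1 ` Bi"
  have finG: "finite G" unfolding G_def using finite_subset[OF Bi(1) finite_Vset] by simp
  have pG: "prj n e ` G = K" unfolding G_def Bi(3) image_image pH ..
  have injG: "inj_on (prj n e) G"
    unfolding G_def inj_on_def using Bi(2) by (auto simp: pH inj_on_def)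
  have injspan: "inj_on (prj n e) (V.span G)"
    by (rule P.linear_inj_on_span_independent_image[OF lp]) (use pG K(2) injG in auto)
  have indG: "V.independent G"
  proof
    assume "V.dependent G"
    then obtain a where a: "a \<in> G" "a \<in> V.span (G - {a})" unfolding V.dependent_def by blast
    have "prj n e a \<in> prj n e ` V.span (G - {a})" using a(2) by blast
    also have "\<dots> = V.span (prj n e ` (G - {a}))" using P.linear_span_image[OF lp] by simp
    also have "prj n e ` (G - {a}) = K - {prj n e a}"
      using inj_on_image_set_diff[OF injG, of G "{a}"] a(1) pG by auto
    finally have "V.dependent K" unfolding V.dependent_def using a(1) pG by blast
    then show False using K(2) by blast
  qed
  have cardG: "card G = card K" using card_image[OF injG] pG by simp
  have GCe1: "G \<subseteq> Ce1" unfolding Ce1 G_def using Bi(1) Vset_mono[of e "e+1" n]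
    by (auto intro: V.span_base)
  obtain K1 where K1: "K1 \<subseteq> Ce1" "V.independent K1" "Ce1 \<subseteq> V.span K1" "card K1 = V.dim Ce1"
    by (rule V.basis_exists)
  have finK1: "finite K1"
    using V.independent_span_bound[OF _ K1(2), of "H1 ` Vset n (e+1)"] K1(1) Ce1 finite_Vset by auto
  have Ce1G: "Ce1 \<subseteq> V.span G"
  proof
    fix a assume aC: "a \<in> Ce1"
    show "a \<in> V.span G"
    proof (rule ccontr)
      assume na: "a \<notin> V.span G"
      then have anG: "a \<notin> G" using V.span_base by blast
      have ind: "V.independent (insert a G)" using na indG by (simp add: V.independent_insert anG)
      have "insert a G \<subseteq> V.span K1" using aC GCe1 K1(3) by auto
      from V.independent_span_bound[OF finK1 ind this]
      have "card (insert a G) \<le> card K1" by simp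
      also have "\<dots> = card G" using K1(4) cardG cardK dimeq Ce_def Ce1_def by simp
      finally show False using finG anG by simp
    qed
  qed
  have inj: "inj_on (prj n e) Ce1" using injspan Ce1G by (rule inj_on_subset)
  have sub1: "prj n e ` Ce1 \<subseteq> Ce"
  proof -
    have "prj n e ` Ce1 \<subseteq> prj n e ` V.span G" using Ce1G by blast
    also have "\<dots> = V.span K" using P.linear_span_image[OF lp, of G] pG by simp
    also have "\<dots> \<subseteq> Ce" unfolding Ce using K(1) by (rule V.span_mono)
    finally show ?thesis .
  qed
  have sub2: "Ce \<subseteq> prj n e ` Ce1"
  proof -
    have "Ce = V.span (prj n e ` H1 ` Vset n e)" unfolding Ce image_image pH ..
    also have "\<dots> = prj n e ` V.span (H1 ` Vset n e)" using P.linear_span_image[OF lp] by simp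
    also have "\<dots> \<subseteq> prj n e ` Ce1" unfolding Ce1
      by (intro image_mono V.span_mono) (use Vset_mono[of e "e+1" n] in auto)
    finally show ?thesis .
  qed
  have "Ce1 \<subseteq> V.span (H1 ` Vset n e)"
    using Ce1G V.span_mono[of G "H1 ` Vset n e"] Bi(1) unfolding G_def by auto
  then show ?thesis using inj sub1 sub2 unfolding Ce_def Ce1_def H1_def by auto
qed


lemma TU_small:
  assumes U: "U \<in> Vset n 2" and key: "\<And>i T. i \<in> {1..n} \<Longrightarrow> T \<in> Vset n (e+1) \<Longrightarrow> Tm i (Hcol n e y T) = Hcol n e y (T \<union> {i})"
    and T: "T \<in> Vset n e"
  shows "TU Tm U (Hcol n e y T) = Hcol n e y (T \<union> U)"
proof -
  have Un1: "U \<subseteq> {1..n}" "card U \<le> 2" using U unfolding Vset_def by auto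
  have fU: "finite U" using Un1(1) by (rule finite_subset) simp
  have T1: "T \<in> Vset n (e+1)" using T Vset_mono[of e "e+1" n] by auto
  have two: "Tm a (Tm b (Hcol n e y T)) = Hcol n e y (T \<union> {a,b})" if "a \<in> {1..n}" "b \<in> {1..n}" for a b
  proof -
    have "Tm b (Hcol n e y T) = Hcol n e y (T \<union> {b})" using key[OF that(2) T1] .
    moreover have "T \<union> {b} \<in> Vset n (e+1)" using Vset_insert[OF T that(2)] .
    ultimately show ?thesis using key[OF that(1)] by (simp add: insert_commute)
  qed
  consider "card U = 0" | "card U = 1" | "card U = 2" using Un1(2) by linarith
  then show ?thesis
  proof cases
    case 1
    then have "U = {}" using fU by simp
    then show ?thesis by (simp add: TU_def)
  next
    case 2
    then obtain a where "U = {a}" by (auto simp: card_1_singleton_iff)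
    then show ?thesis using key[of a T] T1 Un1(1) by (simp add: TU_def)
  next
    case 3
    then obtain a b where ab: "U = {a,b}" "a \<noteq> b" by (auto simp: card_2_iff)
    have abn: "a \<in> {1..n}" "b \<in> {1..n}" using Un1(1) ab(1) by auto
    show ?thesis
    proof (cases "a < b")
      case True
      then have "sorted_list_of_set U = [a,b]" using ab by simp
      then show ?thesis using two[OF abn] ab by (simp add: TU_def)
    next
      case False
      then have "sorted_list_of_set U = [b,a]" using ab by (simp add: insert_commute)
      then show ?thesis using two[OF abn(2,1)] ab by (simp add: TU_def insert_commute)
    qed
  qed
qed

theorem lemma4p5:
  fixes n d e m :: nat
    and y :: "nat set \<Rightarrow> 'a::{field,finite}"
    and c :: "nat \<Rightarrow> nat set \<Rightarrow> 'a"
  assumes "d \<ge> 1"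
    and "e \<le> d - 1"
    and "rankH n e y = rankH n (e + 1) y"
    and "rankH n e y > 0"
    and "\<forall>l\<in>{1..m}. \<forall>W\<in>Vset n (2*d - 2).
           (\<Sum>U\<in>Vset n 2. c l U * y (U \<union> W)) = 0"
  shows "\<exists>T :: nat \<Rightarrow> (nat set \<Rightarrow> 'a) \<Rightarrow> (nat set \<Rightarrow> 'a).
           (\<forall>i\<in>{1..n}. (\<forall>v\<in>colspace n e y. T i v \<in> colspace n e y)
              \<and> (\<forall>u\<in>colspace n e y. \<forall>v\<in>colspace n e y. T i (u + v) = T i u + T i v)
              \<and> (\<forall>a. \<forall>v\<in>colspace n e y. T i (fscale a v) = fscale a (T i v)))
         \<and> (\<forall>i\<in>{1..n}. \<forall>v\<in>colspace n e y. T i (T i v) = T i v)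
         \<and> (\<forall>i\<in>{1..n}. \<forall>j\<in>{1..n}. \<forall>v\<in>colspace n e y. T i (T j v) = T j (T i v))
         \<and> (\<forall>l\<in>{1..m}. \<forall>v\<in>colspace n e y.
              (\<Sum>U\<in>Vset n 2. fscale (c l U) (TU T U v)) = 0)"
proof -
  define H0 where "H0 = Hcol n e y"
  define H1 where "H1 = Hcol n (e+1) y"
  define Ce where "Ce = colspace n e y"
  define Ce1 where "Ce1 = colspace n (e+1) y"
  have Ce: "Ce = V.span (H0 ` Vset n e)" by (simp add: Ce_def H0_def colspace_def)
  have Ce1: "Ce1 = V.span (H1 ` Vset n (e+1))" by (simp add: Ce1_def H1_def colspace_def)
  have fl: "inj_on (prj n e) Ce1" "prj n e ` Ce1 = Ce" "Ce1 \<subseteq> V.span (H1 ` Vset n e)"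
    using flat[of n e y] assms(3) unfolding rankH_def Ce_def Ce1_def H1_def by auto
  have lp: "Vector_Spaces.linear fscale fscale (prj n e :: (nat set \<Rightarrow> 'a) \<Rightarrow> _)" by (rule linear_prj)
  have ls: "\<And>i. Vector_Spaces.linear fscale fscale (shf n e i :: (nat set \<Rightarrow> 'a) \<Rightarrow> _)" by (rule linear_shf)
  define L where "L v = the_inv_into Ce1 (prj n e) v" for v
  define Tm where "Tm i v = shf n e i (L v)" for i v
  have LC: "L v \<in> Ce1" "prj n e (L v) = v" if "v \<in> Ce" for v
    using the_inv_into_into[OF fl(1), of v Ce1] f_the_inv_into_f[OF fl(1), of v] that fl(2)
    unfolding L_def by auto
  have Lu: "L (prj n e w) = w" if "w \<in> Ce1" for w
    using the_inv_into_f_f[OF fl(1) that] unfolding L_def .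
  have H1C: "H1 T \<in> Ce1" if "T \<in> Vset n (e+1)" for T
    unfolding Ce1 using that by (auto intro: V.span_base)
  have pH: "prj n e (H1 T) = H0 T" for T using prj_Hcol[of n e y T] by (simp add: H0_def H1_def)
  have H0C: "H0 T \<in> Ce" if "T \<in> Vset n (e+1)" for T
    using fl(2) H1C[OF that] pH by (metis imageI)
  have key: "Tm i (Hcol n e y T) = Hcol n e y (T \<union> {i})" if "i \<in> {1..n}" "T \<in> Vset n (e+1)" for i T
  proof -
    have "L (H0 T) = H1 T" using Lu[OF H1C[OF that(2)]] pH by simp
    then show ?thesis unfolding Tm_def H0_def[symmetric] using shf_Hcol[OF that(1), of e y T]
      by (simp add: H1_def H0_def)
  qed
  have linL: "linon Ce L"
    unfolding linon_def
  proof safe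
    fix u v assume uv: "u \<in> Ce" "v \<in> Ce"
    have "L u + L v \<in> Ce1" using LC(1)[OF uv(1)] LC(1)[OF uv(2)] unfolding Ce1 by (rule V.span_add)
    moreover have "prj n e (L u + L v) = u + v"
      using P.linear_add[OF lp] LC(2)[OF uv(1)] LC(2)[OF uv(2)] by simp
    ultimately show "L (u + v) = L u + L v" using Lu by metis
  next
    fix a v assume v: "v \<in> Ce"
    have "fscale a (L v) \<in> Ce1" using LC(1)[OF v] unfolding Ce1 by (rule V.span_scale)
    moreover have "prj n e (fscale a (L v)) = fscale a v"
      using P.linear_scale[OF lp] LC(2)[OF v] by simp
    ultimately show "L (fscale a v) = fscale a (L v)" using Lu by metis
  qed
  have linT: "linon Ce (Tm i)" for i
    using linL P.linear_add[OF ls] P.linear_scale[OF ls] LC(1) unfolding linon_def Tm_def by simp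
  have presT: "pres Ce (Tm i)" if i: "i \<in> {1..n}" for i
    unfolding pres_def
  proof
    fix v assume v: "v \<in> Ce"
    have "shf n e i ` V.span (H1 ` Vset n e) = V.span (shf n e i ` H1 ` Vset n e)"
      using P.linear_span_image[OF ls] by simp
    also have "\<dots> \<subseteq> Ce"
    proof (rule V.span_minimal)
      show "shf n e i ` H1 ` Vset n e \<subseteq> Ce"
      proof safe
        fix T assume T: "T \<in> Vset n e"
        have "shf n e i (H1 T) = H0 (T \<union> {i})" using shf_Hcol[OF i] by (simp add: H0_def H1_def)
        then show "shf n e i (H1 T) \<in> Ce" using H0C[OF Vset_insert[OF T i]] by simp
      qed
      show "V.subspace Ce" unfolding Ce by simp
    qed
    finally show "Tm i v \<in> Ce" unfolding Tm_def using LC(1)[OF v] fl(3) by blast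
  qed
  have LP: "linon Ce (Tm i) \<and> pres Ce (Tm i)" if "i \<in> {1..n}" for i using linT presT that by simp
  have gen: "v \<in> Ce \<Longrightarrow> f v = 0" if "linon Ce f" "\<And>T. T \<in> Vset n e \<Longrightarrow> f (H0 T) = 0" for f v
    using zero_on_span[of "H0 ` Vset n e" f v] that unfolding Ce by auto
  have T1: "T \<in> Vset n (e+1)" if "T \<in> Vset n e" for T using that Vset_mono[of e "e+1" n] by auto
  show ?thesis
  proof (rule exI[of _ Tm], intro conjI ballI allI)
    fix i assume i: "i \<in> {1..n}"
    fix v assume "v \<in> colspace n e y"
    then show "Tm i v \<in> colspace n e y" using presT[OF i] unfolding pres_def Ce_def by blast
  next
    fix i u v assume "i \<in> {1..n}" "u \<in> colspace n e y" "v \<in> colspace n e y"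
    then show "Tm i (u + v) = Tm i u + Tm i v" using linT unfolding linon_def Ce_def by blast
  next
    fix i a v assume "i \<in> {1..n}" "v \<in> colspace n e y"
    then show "Tm i (fscale a v) = fscale a (Tm i v)" using linT unfolding linon_def Ce_def by blast
  next
    fix i v assume i: "i \<in> {1..n}" and v: "v \<in> colspace n e y"
    have "(\<lambda>v. (Tm i \<circ> Tm i) v - Tm i v) v = 0"
    proof (rule gen[where f="\<lambda>v. (Tm i \<circ> Tm i) v - Tm i v"])
      show "linon Ce (\<lambda>v. (Tm i \<circ> Tm i) v - Tm i v)"
        by (intro linon_diff linon_comp linT presT i)
      fix T assume T: "T \<in> Vset n e"
      show "(Tm i \<circ> Tm i) (H0 T) - Tm i (H0 T) = 0"
        using key[OF i T1[OF T]] key[OF i Vset_insert[OF T i]] by (simp add: H0_def)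
    qed (use v Ce_def in simp)
    then show "Tm i (Tm i v) = Tm i v" by simp
  next
    fix i j v assume i: "i \<in> {1..n}" and j: "j \<in> {1..n}" and v: "v \<in> colspace n e y"
    have "(\<lambda>v. (Tm i \<circ> Tm j) v - (Tm j \<circ> Tm i) v) v = 0"
    proof (rule gen[where f="\<lambda>v. (Tm i \<circ> Tm j) v - (Tm j \<circ> Tm i) v"])
      show "linon Ce (\<lambda>v. (Tm i \<circ> Tm j) v - (Tm j \<circ> Tm i) v)"
        by (intro linon_diff linon_comp linT presT i j)
      fix T assume T: "T \<in> Vset n e"
      show "(Tm i \<circ> Tm j) (H0 T) - (Tm j \<circ> Tm i) (H0 T) = 0"
        using key[OF i T1[OF T]] key[OF j T1[OF T]] key[OF i Vset_insert[OF T j]] key[OF j Vset_insert[OF T i]]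
        by (simp add: H0_def Un_ac insert_commute)
    qed (use v Ce_def in simp)
    then show "Tm i (Tm j v) = Tm j (Tm i v)" by simp
  next
    fix l v assume l: "l \<in> {1..m}" and v: "v \<in> colspace n e y"
    show "(\<Sum>U\<in>Vset n 2. fscale (c l U) (TU Tm U v)) = 0"
    proof (rule gen[where f="\<lambda>v. \<Sum>U\<in>Vset n 2. fscale (c l U) (TU Tm U v)"])
      show "linon Ce (\<lambda>v. \<Sum>U\<in>Vset n 2. fscale (c l U) (TU Tm U v))"
      proof (rule linon_sum)
        fix U assume U: "U \<in> Vset n 2"
        have "U \<subseteq> {1..n}" using U unfolding Vset_def by auto
        moreover then have "finite U" by (rule finite_subset) simp
        ultimately show "linon Ce (TU Tm U)" using TU_lin[of U "{1..n}" Ce Tm] LP by blast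
      qed
      fix T assume T: "T \<in> Vset n e"
      have "(\<Sum>U\<in>Vset n 2. fscale (c l U) (TU Tm U (H0 T))) = (\<Sum>U\<in>Vset n 2. fscale (c l U) (H0 (T \<union> U)))"
        using TU_small[where Tm=Tm and e=e and y=y and n=n, OF _ key T] unfolding H0_def by (intro sum.cong) auto
      also have "\<dots> = 0"
      proof (rule ext)
        fix S
        show "(\<Sum>U\<in>Vset n 2. fscale (c l U) (H0 (T \<union> U))) S = 0 S"
        proof (cases "S \<in> Vset n e")
          case False
          then show ?thesis by (simp add: sum_fun_apply fscale_def H0_def Hcol_def)
        next
          case True
          have "S \<union> T \<in> Vset n (2*d - 2)"
          proof -
            have "finite S" "finite T" using True T unfolding Vset_def by (auto intro: finite_subset)
            have "card (S \<union> T) \<le> card S + card T" by (rule card_Un_le)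
            also have "\<dots> \<le> 2*d - 2" using True T assms(1,2) unfolding Vset_def by auto
            finally show ?thesis using True T unfolding Vset_def by auto
          qed
          then have "(\<Sum>U\<in>Vset n 2. c l U * y (U \<union> (S \<union> T))) = 0" using assms(5) l by blast
          then show ?thesis using True by (simp add: sum_fun_apply fscale_def H0_def Hcol_def Un_ac)
        qed
      qed
      finally show "(\<Sum>U\<in>Vset n 2. fscale (c l U) (TU Tm U (H0 T))) = 0" .
    qed (use v Ce_def in simp)
  qed
qed

end
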